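(* Let $(\{0,1\}^{\mathbb N},\mathbb B_\Pi,m,\sigma)$ be an ergodic Markov shift over two symbols, $X$ a lexicographic-like random variable, $d\in\mathbb N$, $O=\bigcup_{n=0}^\infty\sigma^{-n}(\{\overline0\})$ with $\overline0=(0,0,\dots)$, and $\widetilde{\mathcal P}^X(d)=\{P\setminus O\mid P\in\mathcal P^X(d)\}\cup\{O\}$. Then for every $P\in\widetilde{\mathcal P}^X(d)\setminus\{O\}$ there are $a_0,\dots,a_{d-1}\in\{0,1\}$ with $P\subseteq C_{a_0a_1\dots a_{d-1}}$.
   Context: Markov shift over $\{0,1\}$: given a $2\times2$ stochastic matrix $Q=(q_{ij})$ and a stationary probability vector $p$ with positive entries, the system on one-sided sequences $s=(s_0,s_1,\dots)\in\{0,1\}^{\mathbb N}$ with $\sigma$-algebra $\mathbb B_\Pi$ generated by cylinders $C_{a_0\dots a_{n-1}}=\{s:s_i=a_i,i<n\}$, shift $(\sigma s)_j=s_{j+1}$ and $m(C_{a_0\dots a_{n-1}})=p_{a_0}q_{a_0a_1}\cdots q_{a_{n-2}a_{n-1}}$; ergodic means every $\sigma$-invariant set has measure $0$ or $1$. Lexicographic order: $r\prec s$ iff $r_0<s_0$ or there is $k\in\mathbb N$ with $r_i=s_i$ for $i<k$ and $r_k<s_k$. $X$ is lexicographic-like if it is injective on a set of full $m$-measure and for all $s$ and $j,n\in\mathbb N_0$: $X(\sigma^j s)\le X(\sigma^n s)$ iff $\sigma^j s\preceq\sigma^n s$. Ordinal pattern: $(x_0,\dots,x_d)$ has pattern $\pi=(r_0,\dots,r_d)\in\Pi_d$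 (permutations of $\{0,\dots,d\}$) if $x_{r_0}\ge\dots\ge x_{r_d}$ and $r_{l-1}>r_l$ whenever $x_{r_{l-1}}=x_{r_l}$. The ordinal partition $\mathcal P^X(d)$ consists of the sets $P_\pi=\{s:(X(\sigma^d s),\dots,X(\sigma s),X(s))\text{ has ordinal pattern }\pi\}$, $\pi\in\Pi_d$. *)

theory Defs
  imports "HOL-Analysis.Analysis"
begin

text \<open>Symbols 0 and 1 are encoded as False and True (so the order 0 < 1 is False < True).
  One-sided sequences over the two symbols have type nat \<Rightarrow> bool.\<close>

type_synonym seq = "nat \<Rightarrow> bool"

definition shift :: "seq \<Rightarrow> seq" where
  "shift s = (\<lambda>j. s (Suc j))"

definition cylinder :: "bool list \<Rightarrow> seq set" where
  "cylinder a = {s. \<forall>i<length a. s i = a ! i}"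

definition cylinders :: "seq set set" where
  "cylinders = range cylinder"

definition markov_cyl :: "(bool \<Rightarrow> real) \<Rightarrow> (bool \<Rightarrow> bool \<Rightarrow> real) \<Rightarrow> bool list \<Rightarrow> real" where
  "markov_cyl p Q a = p (a ! 0) * (\<Prod>i<length a - 1. Q (a ! i) (a ! Suc i))"

definition stochastic :: "(bool \<Rightarrow> bool \<Rightarrow> real) \<Rightarrow> bool" where
  "stochastic Q \<longleftrightarrow> (\<forall>i j. Q i j \<ge> 0) \<and> (\<forall>i. Q i False + Q i True = 1)"

definition stationary_pos :: "(bool \<Rightarrow> real) \<Rightarrow> (bool \<Rightarrow> bool \<Rightarrow> real) \<Rightarrow> bool" where
  "stationary_pos p Q \<longleftrightarrow> (\<forall>i. p i > 0) \<and> p False + p True = 1 \<and>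
     (\<forall>j. p False * Q False j + p True * Q True j = p j)"

definition markov_shift :: "seq measure \<Rightarrow> (bool \<Rightarrow> real) \<Rightarrow> (bool \<Rightarrow> bool \<Rightarrow> real) \<Rightarrow> bool" where
  "markov_shift M p Q \<longleftrightarrow> stochastic Q \<and> stationary_pos p Q \<and>
     space M = UNIV \<and> sets M = sigma_sets UNIV cylinders \<and>
     (\<forall>a. a \<noteq> [] \<longrightarrow> emeasure M (cylinder a) = ennreal (markov_cyl p Q a))"

definition ergodic_shift :: "seq measure \<Rightarrow> bool" where
  "ergodic_shift M \<longleftrightarrow>
     (\<forall>A \<in> sets M. shift -` A = A \<longrightarrow> emeasure M A = 0 \<or> emeasure M A = 1)"

definition lex_less :: "seq \<Rightarrow> seq \<Rightarrow> bool" where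
  "lex_less r s \<longleftrightarrow> r 0 < s 0 \<or> (\<exists>k. (\<forall>i<k. r i = s i) \<and> r k < s k)"

definition lex_le :: "seq \<Rightarrow> seq \<Rightarrow> bool" where
  "lex_le r s \<longleftrightarrow> lex_less r s \<or> r = s"

definition lexicographic_like :: "seq measure \<Rightarrow> (seq \<Rightarrow> real) \<Rightarrow> bool" where
  "lexicographic_like M X \<longleftrightarrow>
     (\<exists>A \<in> sets M. emeasure M (space M - A) = 0 \<and> inj_on X A) \<and>
     (\<forall>s j n. X ((shift ^^ j) s) \<le> X ((shift ^^ n) s) \<longleftrightarrow>
               lex_le ((shift ^^ j) s) ((shift ^^ n) s))"

definition perms :: "nat \<Rightarrow> nat list set" where
  "perms d = {r. distinct r \<and> set r = {0..d}}"

definition has_pattern :: "nat \<Rightarrow> (nat \<Rightarrow> real) \<Rightarrow> nat list \<Rightarrow> bool" where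
  "has_pattern d x r \<longleftrightarrow> r \<in> perms d \<and>
     (\<forall>l. 1 \<le> l \<and> l \<le> d \<longrightarrow> x (r ! (l - 1)) \<ge> x (r ! l) \<and>
            (x (r ! (l - 1)) = x (r ! l) \<longrightarrow> r ! (l - 1) > r ! l))"

text \<open>P_\<pi>: the vector (X(\<sigma>^d s), ..., X(\<sigma> s), X(s)) has pattern \<pi>; its i-th entry is X(\<sigma>^(d-i) s).\<close>
definition pattern_set :: "(seq \<Rightarrow> real) \<Rightarrow> nat \<Rightarrow> nat list \<Rightarrow> seq set" where
  "pattern_set X d \<pi> = {s. has_pattern d (\<lambda>i. X ((shift ^^ (d - i)) s)) \<pi>}"

definition ordinal_partition :: "(seq \<Rightarrow> real) \<Rightarrow> nat \<Rightarrow> seq set set" where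
  "ordinal_partition X d = pattern_set X d ` perms d"

definition zero_orbit :: "seq set" where
  "zero_orbit = (\<Union>n. (shift ^^ n) -` {(\<lambda>_. False)})"

definition modified_partition :: "(seq \<Rightarrow> real) \<Rightarrow> nat \<Rightarrow> seq set set" where
  "modified_partition X d = ((\<lambda>P. P - zero_orbit) ` ordinal_partition X d) \<union> {zero_orbit}"

end

theory Submission
  imports Defs
begin

lemma chain_aux:
  assumes hp: "has_pattern d x r"
  shows "pa + Suc k \<le> d \<Longrightarrow> x (r ! pa) \<ge> x (r ! (pa + Suc k)) \<and>
     (x (r ! pa) = x (r ! (pa + Suc k)) \<longrightarrow> r ! pa > r ! (pa + Suc k))"
proof (induction k)
  case 0
  have "1 \<le> Suc pa \<and> Suc pa \<le> d" using 0 by simp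
  then show ?case using hp unfolding has_pattern_def
    by (metis add_Suc_right add_0_right diff_Suc_1)
next
  case (Suc k)
  have IH: "x (r ! pa) \<ge> x (r ! (pa + Suc k)) \<and>
     (x (r ! pa) = x (r ! (pa + Suc k)) \<longrightarrow> r ! pa > r ! (pa + Suc k))"
    using Suc by simp
  have "1 \<le> pa + Suc (Suc k) \<and> pa + Suc (Suc k) \<le> d" using Suc.prems by simp
  then have st: "x (r ! (pa + Suc k)) \<ge> x (r ! (pa + Suc (Suc k))) \<and>
     (x (r ! (pa + Suc k)) = x (r ! (pa + Suc (Suc k))) \<longrightarrow> r ! (pa + Suc k) > r ! (pa + Suc (Suc k)))"
    using hp unfolding has_pattern_def
    by (metis add_Suc_right diff_Suc_1)
  show ?case using IH st by fastforce
qed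

lemma chain:
  assumes "has_pattern d x r" "pa < pb" "pb \<le> d"
  shows "x (r ! pa) \<ge> x (r ! pb) \<and> (x (r ! pa) = x (r ! pb) \<longrightarrow> r ! pa > r ! pb)"
proof -
  obtain k where "pb = pa + Suc k" using assms(2) less_iff_Suc_add by auto
  then show ?thesis using chain_aux[OF assms(1)] assms(3) by simp
qed

definition B :: "nat \<Rightarrow> nat list \<Rightarrow> nat \<Rightarrow> bool" where
  "B d r j = (\<exists>pa pb. pa < pb \<and> pb \<le> d \<and> r ! pa = d - j \<and> r ! pb = d - j - 1)"

lemma pat_B:
  assumes hp: "has_pattern d x r" and i: "Suc i \<le> d"
  shows "(x i \<le> x (Suc i)) \<longleftrightarrow> (\<exists>pa pb. pa < pb \<and> pb \<le> d \<and> r ! pa = Suc i \<and> r ! pb = i)"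
proof -
  have r: "distinct r" "set r = {0..d}" using hp unfolding has_pattern_def perms_def by auto
  have len: "length r = Suc d"
    using r distinct_card[OF r(1)] by simp
  obtain p1 where p1: "p1 < Suc d" "r ! p1 = Suc i" using r len i
    by (metis atLeastAtMost_iff in_set_conv_nth le0)
  obtain p0 where p0: "p0 < Suc d" "r ! p0 = i" using r len i
    by (metis atLeastAtMost_iff in_set_conv_nth le0 Suc_leD)
  have ne: "p0 \<noteq> p1" using p0 p1 by auto
  show ?thesis
  proof
    assume le: "x i \<le> x (Suc i)"
    show "\<exists>pa pb. pa < pb \<and> pb \<le> d \<and> r ! pa = Suc i \<and> r ! pb = i"
    proof (cases "p1 < p0")
      case True then show ?thesis using p0 p1 by (intro exI[of _ p1] exI[of _ p0]) simp
    next
      case False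
      then have "p0 < p1" using ne by simp
      from chain[OF hp this] p0 p1 le show ?thesis by force
    qed
  next
    assume "\<exists>pa pb. pa < pb \<and> pb \<le> d \<and> r ! pa = Suc i \<and> r ! pb = i"
    then obtain pa pb where "pa < pb" "pb \<le> d" "r ! pa = Suc i" "r ! pb = i" by blast
    from chain[OF hp this(1,2)] this(3,4) show "x i \<le> x (Suc i)" by simp
  qed
qed

lemma lex_first:
  assumes "t \<noteq> (\<lambda>_. False)"
  shows "t 0 \<longleftrightarrow> lex_le (shift t) t"
proof (cases "t 0")
  case True
  show ?thesis
  proof (cases "\<forall>i. t i")
    case True
    then have "shift t = t" unfolding shift_def by auto
    then show ?thesis using \<open>t 0\<close> unfolding lex_le_def by simp
  next
    case False
    define k where "k = (LEAST i. \<not> t i)"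
    have tk: "\<not> t k" using False unfolding k_def by (metis LeastI)
    have bel: "\<And>i. i < k \<Longrightarrow> t i" unfolding k_def using not_less_Least by blast
    have k0: "k \<noteq> 0" using tk True by (metis (full_types))
    have a1: "\<forall>i<k-1. shift t i = t i"
      using bel unfolding shift_def by simp
    have a2: "shift t (k-1) < t (k-1)"
      using bel tk k0 unfolding shift_def by simp
    have "(\<forall>i<k-1. shift t i = t i) \<and> shift t (k-1) < t (k-1)" using a1 a2 by blast
    then show ?thesis using True unfolding lex_le_def lex_less_def by blast
  qed
next
  case False
  have "\<exists>i. t i" using assms by auto
  define k where "k = (LEAST i. t i)"
  have tk: "t k" using \<open>\<exists>i. t i\<close> unfolding k_def by (metis LeastI)
  have bel: "\<And>i. i < k \<Longrightarrow> \<not> t i" unfolding k_def using not_less_Least by blast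
  have k0: "k \<noteq> 0" using tk False by (metis (full_types))
  have sk: "shift t (k-1)" "\<not> t (k-1)" using tk bel k0 unfolding shift_def by auto
  have "\<not> lex_less (shift t) t"
  proof
    assume "lex_less (shift t) t"
    then obtain k' where k': "\<forall>i<k'. shift t i = t i" "shift t k' < t k'"
      unfolding lex_less_def by blast
    show False
    proof (cases "k' < k - 1")
      case True
      then have "\<not> t k'" using bel by simp
      then show False using k'(2) by simp
    next
      case False
      show False
      proof (cases "k' = k - 1")
        case True then show False using k'(2) sk by simp
      next
        case False
        then have "k - 1 < k'" using \<open>\<not> k' < k - 1\<close> by simp
        then show False using k'(1) sk by auto
      qed
    qed
  qed
  moreover have "shift t \<noteq> t" using sk by auto
  ultimately show ?thesis using False unfolding lex_le_def by simp
qed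

theorem lemma7:
  fixes M :: "seq measure" and p :: "bool \<Rightarrow> real" and Q :: "bool \<Rightarrow> bool \<Rightarrow> real"
    and X :: "seq \<Rightarrow> real" and d :: nat
  assumes "markov_shift M p Q"
    and "ergodic_shift M"
    and "X \<in> borel_measurable M"
    and "lexicographic_like M X"
    and "d \<ge> 1"
    and "P \<in> modified_partition X d - {zero_orbit}"
  shows "\<exists>a. length a = d \<and> P \<subseteq> cylinder a"
proof -
  have lexX: "\<And>s j n. X ((shift ^^ j) s) \<le> X ((shift ^^ n) s) \<longleftrightarrow>
               lex_le ((shift ^^ j) s) ((shift ^^ n) s)"
    using assms(4) unfolding lexicographic_like_def by blast
  obtain r where r: "r \<in> perms d" "P = pattern_set X d r - zero_orbit"
  proof -
    have "P \<in> (\<lambda>P. P - zero_orbit) ` ordinal_partition X d"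
      using assms(6) unfolding modified_partition_def by blast
    then obtain P' where "P' \<in> ordinal_partition X d" "P = P' - zero_orbit" by blast
    then show ?thesis using that unfolding ordinal_partition_def by blast
  qed
  have "P \<subseteq> cylinder (map (B d r) [0..<d])"
  proof
    fix s assume "s \<in> P"
    then have hp: "has_pattern d (\<lambda>i. X ((shift ^^ (d - i)) s)) r" and nO: "s \<notin> zero_orbit"
      using r unfolding pattern_set_def by auto
    have "s j = B d r j" if j: "j < d" for j
    proof -
      have nz: "(shift ^^ j) s \<noteq> (\<lambda>_. False)" using nO unfolding zero_orbit_def by auto
      have "s j = ((shift ^^ j) s) 0"
      proof (induction j arbitrary: s)
        case 0 show ?case by simp
      next
        case (Suc j) show ?case
          using Suc.IH[of "shift s"] by (simp only: funpow_Suc_right o_apply shift_def)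
      qed
      also have "\<dots> = lex_le (shift ((shift ^^ j) s)) ((shift ^^ j) s)"
        using lex_first[OF nz] .
      also have "\<dots> = (X ((shift ^^ Suc j) s) \<le> X ((shift ^^ j) s))"
        using lexX[of "Suc j" s j] by (simp only: funpow.simps o_apply)
      also have "\<dots> = ((\<lambda>i. X ((shift ^^ (d - i)) s)) (d - j - 1) \<le>
                        (\<lambda>i. X ((shift ^^ (d - i)) s)) (Suc (d - j - 1)))"
        using j by (simp add: Suc_diff_Suc)
      also have "\<dots> = B d r j"
        using pat_B[OF hp, of "d - j - 1"] j unfolding B_def
        by (simp add: Suc_diff_Suc)
      finally show ?thesis .
    qed
    then show "s \<in> cylinder (map (B d r) [0..<d])" unfolding cylinder_def by simp
  qed
  then show ?thesis by (intro exI[of _ "map (B d r) [0..<d]"]) simp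
qed

end
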